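(* Let $\phi$ be a strictly convex norm on $\mathbf{R}^n$ of class $\mathcal{C}^2$ on $\mathbf{R}^n\setminus\{0\}$, $K\subseteq\mathbf{R}^n$ closed, $\sigma>1$, and $K_\sigma=\{x:\rho^\phi_K(x)\ge\sigma\}\setminus K$. For $t\in\mathbf{R}$ let $h_t$ be the multivalued map $h_t(y)=ty+(1-t)\xi^\phi_K(y)=\{ty+(1-t)a:a\in\xi^\phi_K(y)\}$. Then for every $0<t<\sigma$, $h_t|K_\sigma$ is (single-valued and) a homeomorphism of $K_\sigma$ onto $K_{\sigma/t}$ with inverse $h_{1/t}|K_{\sigma/t}$.
   Context: A norm $\phi$ is strictly convex if $\phi(a+b)=\phi(a)+\phi(b)$ implies $\phi(b)a=\phi(a)b$. For closed $K$: $\delta^\phi_K(x)=\inf\{\phi(y-x):y\in K\}$; $\xi^\phi_K(x)=K\cap\{w:\phi(x-w)=\delta^\phi_K(x)\}$; $\rho^\phi_K(x)=\sup\bigl(\mathbf{R}\cap\{s:\delta^\phi_K(a+s(x-a))=s\,\delta^\phi_K(x)\}\bigr)$ for any $a\in\xi^\phi_K(x)$ (independent of the choice of $a$). For any $\tau\ge1$, $K_\tau=\{x:\rho^\phi_K(x)\ge\tau\}\setminus K$. *)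

theory Defs
  imports "HOL-Analysis.Analysis"
begin

definition is_norm :: "('a::real_vector \<Rightarrow> real) \<Rightarrow> bool" where
  "is_norm \<phi> \<longleftrightarrow> (\<forall>x. 0 \<le> \<phi> x) \<and> (\<forall>x. \<phi> x = 0 \<longleftrightarrow> x = 0)
     \<and> (\<forall>c x. \<phi> (c *\<^sub>R x) = \<bar>c\<bar> * \<phi> x)
     \<and> (\<forall>x y. \<phi> (x + y) \<le> \<phi> x + \<phi> y)"

definition strictly_convex_norm :: "('a::real_vector \<Rightarrow> real) \<Rightarrow> bool" where
  "strictly_convex_norm \<phi> \<longleftrightarrow> is_norm \<phi> \<and>
     (\<forall>a b. \<phi> (a + b) = \<phi> a + \<phi> b \<longrightarrow> \<phi> b *\<^sub>R a = \<phi> a *\<^sub>R b)"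

definition C2_off_origin :: "('a::euclidean_space \<Rightarrow> real) \<Rightarrow> bool" where
  "C2_off_origin \<phi> \<longleftrightarrow> (\<exists>D1 :: 'a \<Rightarrow> ('a \<Rightarrow>\<^sub>L real). \<exists>D2 :: 'a \<Rightarrow> ('a \<Rightarrow>\<^sub>L ('a \<Rightarrow>\<^sub>L real)).
      (\<forall>x. x \<noteq> 0 \<longrightarrow> (\<phi> has_derivative blinfun_apply (D1 x)) (at x))
    \<and> (\<forall>x. x \<noteq> 0 \<longrightarrow> (D1 has_derivative blinfun_apply (D2 x)) (at x))
    \<and> continuous_on (- {0}) D2)"

definition delta :: "('a::real_vector \<Rightarrow> real) \<Rightarrow> 'a set \<Rightarrow> 'a \<Rightarrow> real" where
  "delta \<phi> K x = Inf {\<phi> (y - x) | y. y \<in> K}"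

definition xi :: "('a::real_vector \<Rightarrow> real) \<Rightarrow> 'a set \<Rightarrow> 'a \<Rightarrow> 'a set" where
  "xi \<phi> K x = {w \<in> K. \<phi> (x - w) = delta \<phi> K x}"

text \<open>Sup over the reals, taken in the extended reals (value may be +infinity).
  Taken over all admissible a in xi (the value is independent of a).\<close>
definition rho :: "('a::real_vector \<Rightarrow> real) \<Rightarrow> 'a set \<Rightarrow> 'a \<Rightarrow> ereal" where
  "rho \<phi> K x = Sup (ereal ` {s. \<exists>a \<in> xi \<phi> K x.
      delta \<phi> K (a + s *\<^sub>R (x - a)) = s * delta \<phi> K x})"

definition Kt :: "('a::real_vector \<Rightarrow> real) \<Rightarrow> 'a set \<Rightarrow> real \<Rightarrow> 'a set" where
  "Kt \<phi> K \<tau> = {x. rho \<phi> K x \<ge> ereal \<tau>} - K"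

definition hmap :: "('a::real_vector \<Rightarrow> real) \<Rightarrow> 'a set \<Rightarrow> real \<Rightarrow> 'a \<Rightarrow> 'a set" where
  "hmap \<phi> K t y = {t *\<^sub>R y + (1 - t) *\<^sub>R a | a. a \<in> xi \<phi> K y}"

end

theory Submission
  imports Defs
begin

lemma nrm:
  assumes "is_norm \<phi>"
  shows "0 \<le> \<phi> x" "\<phi> x = 0 \<longleftrightarrow> x = 0" "\<phi> (c *\<^sub>R x) = \<bar>c\<bar> * \<phi> x"
    "\<phi> (x + y) \<le> \<phi> x + \<phi> y"
  using assms unfolding is_norm_def by auto

lemma nrm_minus:
  assumes "is_norm \<phi>" shows "\<phi> (- x) = \<phi> x"
  using nrm(3)[OF assms, of "-1" x] by simp

lemma nrm_commute:
  assumes "is_norm \<phi>" shows "\<phi> (x - y) = \<phi> (y - x)"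
  using nrm_minus[OF assms, of "x - y"] by simp

lemma nrm_tri:
  assumes "is_norm \<phi>" shows "\<phi> (x - z) \<le> \<phi> (x - y) + \<phi> (y - z)"
  using nrm(4)[OF assms, of "x - y" "y - z"] by simp

lemma nrm_cont:
  fixes \<phi> :: "'a::euclidean_space \<Rightarrow> real"
  assumes "is_norm \<phi>" shows "continuous_on S \<phi>"
proof -
  have "convex_on UNIV \<phi>"
    unfolding convex_on_def
  proof (intro conjI ballI allI impI)
    fix x y :: 'a and u v :: real
    assume "0 \<le> u" "0 \<le> v" "u + v = 1"
    have "\<phi> (u *\<^sub>R x + v *\<^sub>R y) \<le> \<phi> (u *\<^sub>R x) + \<phi> (v *\<^sub>R y)" by (rule nrm(4)[OF assms])
    also have "\<dots> = u * \<phi> x + v * \<phi> y" using nrm(3)[OF assms] \<open>0 \<le> u\<close> \<open>0 \<le> v\<close> by simp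
    finally show "\<phi> (u *\<^sub>R x + v *\<^sub>R y) \<le> u * \<phi> x + v * \<phi> y" .
  qed simp
  then have "continuous_on UNIV \<phi>" by (rule convex_on_continuous[OF open_UNIV])
  then show ?thesis by (rule continuous_on_subset) simp
qed

lemma nrm_lower:
  fixes \<phi> :: "'a::euclidean_space \<Rightarrow> real"
  assumes "is_norm \<phi>" shows "\<exists>c>0. \<forall>x. c * norm x \<le> \<phi> x"
proof -
  obtain b :: 'a where b: "b \<in> Basis" using nonempty_Basis by blast
  have "b \<in> sphere 0 1" using b by simp
  then obtain u where u: "u \<in> sphere 0 1" and umin: "\<forall>y\<in>sphere 0 1. \<phi> u \<le> \<phi> y"
    using continuous_attains_inf[OF compact_sphere _ nrm_cont[OF assms], of 0 1] by blast
  have "u \<noteq> 0" using u by auto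
  then have pos: "\<phi> u > 0" using nrm(1,2)[OF assms, of u] by linarith
  have "\<phi> u * norm x \<le> \<phi> x" for x
  proof (cases "x = 0")
    case True then show ?thesis using nrm(1)[OF assms, of 0] by simp
  next
    case False
    then have "(1 / norm x) *\<^sub>R x \<in> sphere 0 1" by simp
    then have "\<phi> u \<le> \<phi> ((1 / norm x) *\<^sub>R x)" using umin by blast
    also have "\<dots> = \<phi> x / norm x" using nrm(3)[OF assms] by simp
    finally show ?thesis using False by (simp add: field_simps)
  qed
  then show ?thesis using pos by blast
qed

lemma delta_le:
  assumes "is_norm \<phi>" "y \<in> K" shows "delta \<phi> K x \<le> \<phi> (y - x)"
  unfolding delta_def
  by (rule cInf_lower) (use assms nrm(1)[OF assms(1)] in \<open>auto intro!: bdd_belowI[where m=0]\<close>)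

lemma delta_ge:
  assumes "K \<noteq> {}" "\<And>y. y \<in> K \<Longrightarrow> m \<le> \<phi> (y - x)" shows "m \<le> delta \<phi> K x"
  unfolding delta_def by (rule cInf_greatest) (use assms in auto)

lemma delta_nonneg:
  assumes "is_norm \<phi>" "K \<noteq> {}" shows "0 \<le> delta \<phi> K x"
  by (rule delta_ge) (use assms nrm(1)[OF assms(1)] in auto)

lemma delta_lip:
  assumes "is_norm \<phi>" "K \<noteq> {}" shows "delta \<phi> K x \<le> delta \<phi> K y + \<phi> (y - x)"
proof -
  have "delta \<phi> K x - \<phi> (y - x) \<le> delta \<phi> K y"
  proof (rule delta_ge[OF assms(2)])
    fix w assume "w \<in> K"
    have "delta \<phi> K x \<le> \<phi> (w - x)" by (rule delta_le[OF assms(1) \<open>w \<in> K\<close>])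
    also have "\<dots> \<le> \<phi> (w - y) + \<phi> (y - x)" by (rule nrm_tri[OF assms(1)])
    finally show "delta \<phi> K x - \<phi> (y - x) \<le> \<phi> (w - y)" by simp
  qed
  then show ?thesis by simp
qed

lemma delta_cont:
  fixes \<phi> :: "'a::euclidean_space \<Rightarrow> real"
  assumes "is_norm \<phi>" "K \<noteq> {}" shows "continuous_on S (delta \<phi> K)"
proof (rule continuous_on_subset[of UNIV], rule continuous_on_sequentiallyI)
  fix u :: "nat \<Rightarrow> 'a" and a
  assume "u \<longlonglongrightarrow> a"
  then have "(\<lambda>n. u n - a) \<longlonglongrightarrow> 0" by (simp add: LIM_zero)
  moreover have "isCont \<phi> 0" using nrm_cont[OF assms(1), of UNIV] by (simp add: continuous_on_eq_continuous_at)
  ultimately have "(\<lambda>n. \<phi> (u n - a)) \<longlonglongrightarrow> \<phi> 0" by (rule isCont_tendsto_compose[rotated])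
  then have t0: "(\<lambda>n. \<phi> (u n - a)) \<longlonglongrightarrow> 0" using nrm(2)[OF assms(1), of 0] by simp
  have b: "norm (delta \<phi> K (u n) - delta \<phi> K a) \<le> \<phi> (u n - a)" for n
    using delta_lip[OF assms, of "u n" a] delta_lip[OF assms, of a "u n"] nrm_commute[OF assms(1), of "u n" a]
    unfolding real_norm_def by linarith
  have "(\<lambda>n. delta \<phi> K (u n) - delta \<phi> K a) \<longlonglongrightarrow> 0"
    by (rule Lim_null_comparison[OF always_eventually[OF allI[OF b]] t0])
  then show "(\<lambda>n. delta \<phi> K (u n)) \<longlonglongrightarrow> delta \<phi> K a"
    by (rule LIM_zero_cancel)
qed simp


lemma nrm_tendsto:
  fixes \<phi> :: "'a::euclidean_space \<Rightarrow> real"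
  assumes "is_norm \<phi>" "(f \<longlongrightarrow> l) F" shows "((\<lambda>x. \<phi> (f x)) \<longlongrightarrow> \<phi> l) F"
proof -
  have "isCont \<phi> l" using nrm_cont[OF assms(1), of UNIV] by (simp add: continuous_on_eq_continuous_at)
  then show ?thesis using assms(2) by (rule isCont_tendsto_compose)
qed

lemma delta_tendsto:
  fixes \<phi> :: "'a::euclidean_space \<Rightarrow> real"
  assumes "is_norm \<phi>" "K \<noteq> {}" "(f \<longlongrightarrow> l) F" shows "((\<lambda>x. delta \<phi> K (f x)) \<longlongrightarrow> delta \<phi> K l) F"
proof -
  have "isCont (delta \<phi> K) l" using delta_cont[OF assms(1,2), of UNIV] by (simp add: continuous_on_eq_continuous_at)
  then show ?thesis using assms(3) by (rule isCont_tendsto_compose)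
qed

lemma xi_exists:
  fixes \<phi> :: "'a::euclidean_space \<Rightarrow> real"
  assumes "is_norm \<phi>" "closed K" "K \<noteq> {}"
  shows "\<exists>b\<in>K. \<phi> (x - b) = delta \<phi> K x"
proof -
  obtain w0 where w0: "w0 \<in> K" using assms(3) by blast
  obtain c where c: "c > 0" "\<And>x. c * norm x \<le> \<phi> x" using nrm_lower[OF assms(1)] by blast
  define R where "R = \<phi> (w0 - x) / c"
  define S where "S = K \<inter> cball x R"
  have "compact S" unfolding S_def using assms(2) by (intro closed_Int_compact) auto
  have "norm (w0 - x) \<le> R" unfolding R_def using c(2)[of "w0 - x"] c(1) by (simp add: field_simps)
  then have "w0 \<in> S" unfolding S_def using w0 by (simp add: dist_norm norm_minus_commute)
  have "continuous_on S (\<lambda>w. \<phi> (w - x))"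
    by (rule continuous_on_compose2[OF nrm_cont[OF assms(1), of UNIV]]) (auto intro!: continuous_intros)
  then obtain b where b: "b \<in> S" "\<And>y. y \<in> S \<Longrightarrow> \<phi> (b - x) \<le> \<phi> (y - x)"
    using continuous_attains_inf[OF \<open>compact S\<close>] \<open>w0 \<in> S\<close> by blast
  have "\<phi> (b - x) \<le> delta \<phi> K x"
  proof (rule delta_ge[OF assms(3)])
    fix y assume "y \<in> K"
    show "\<phi> (b - x) \<le> \<phi> (y - x)"
    proof (cases "norm (y - x) \<le> R")
      case True
      then have "y \<in> S" unfolding S_def using \<open>y \<in> K\<close> by (simp add: dist_norm norm_minus_commute)
      then show ?thesis by (rule b(2))
    next
      case False
      then have "c * R < c * norm (y - x)" using c(1) by simp
      also have "\<dots> \<le> \<phi> (y - x)" by (rule c(2))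
      finally have "\<phi> (w0 - x) < \<phi> (y - x)" unfolding R_def using c(1) by simp
      moreover have "\<phi> (b - x) \<le> \<phi> (w0 - x)" by (rule b(2)[OF \<open>w0 \<in> S\<close>])
      ultimately show ?thesis by simp
    qed
  qed
  moreover have "b \<in> K" using b(1) unfolding S_def by simp
  moreover have "delta \<phi> K x \<le> \<phi> (b - x)" by (rule delta_le[OF assms(1) \<open>b \<in> K\<close>])
  ultimately show ?thesis using nrm_commute[OF assms(1), of x b] by (intro bexI[of _ b]) auto
qed

lemma delta_pos:
  fixes \<phi> :: "'a::euclidean_space \<Rightarrow> real"
  assumes "is_norm \<phi>" "closed K" "K \<noteq> {}" "x \<notin> K"
  shows "0 < delta \<phi> K x"
proof -
  obtain b where "b \<in> K" "\<phi> (x - b) = delta \<phi> K x" using xi_exists[OF assms(1-3)] by blast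
  moreover have "x - b \<noteq> 0" using assms(4) \<open>b \<in> K\<close> by auto
  ultimately show ?thesis using nrm(1,2)[OF assms(1), of "x - b"] by linarith
qed

lemma xi_unique:
  fixes \<phi> :: "'a::euclidean_space \<Rightarrow> real"
  assumes sc: "strictly_convex_norm \<phi>" and "closed K" "x \<notin> K" "a \<in> xi \<phi> K x" "s > 1"
    and eq: "delta \<phi> K (a + s *\<^sub>R (x - a)) = s * delta \<phi> K x"
  shows "xi \<phi> K x = {a}"
proof -
  have N: "is_norm \<phi>" using sc unfolding strictly_convex_norm_def by simp
  have aK: "a \<in> K" and ad: "\<phi> (x - a) = delta \<phi> K x" using assms(4) unfolding xi_def by auto
  then have Kne: "K \<noteq> {}" by auto
  define d where "d = delta \<phi> K x"
  have dpos: "d > 0" unfolding d_def by (rule delta_pos[OF N assms(2) Kne assms(3)])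
  define z where "z = a + s *\<^sub>R (x - a)"
  have zx: "z - x = (s - 1) *\<^sub>R (x - a)" unfolding z_def by (simp add: algebra_simps)
  have pzx: "\<phi> (z - x) = (s - 1) * d" unfolding zx using nrm(3)[OF N] assms(5) ad d_def by simp
  have "b = a" if b: "b \<in> xi \<phi> K x" for b
  proof -
    have bK: "b \<in> K" and bd: "\<phi> (x - b) = d" using b unfolding xi_def d_def by auto
    have "s * d = delta \<phi> K z" using eq unfolding z_def d_def by simp
    also have "\<dots> \<le> \<phi> (b - z)" by (rule delta_le[OF N bK])
    also have "\<dots> = \<phi> ((z - x) + (x - b))" using nrm_commute[OF N, of b z] by simp
    finally have ge: "s * d \<le> \<phi> ((z - x) + (x - b))" .
    have "\<phi> ((z - x) + (x - b)) \<le> \<phi> (z - x) + \<phi> (x - b)" by (rule nrm(4)[OF N])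
    then have "\<phi> ((z - x) + (x - b)) = \<phi> (z - x) + \<phi> (x - b)"
      using ge pzx bd by (simp add: algebra_simps)
    then have "\<phi> (x - b) *\<^sub>R (z - x) = \<phi> (z - x) *\<^sub>R (x - b)"
      using sc unfolding strictly_convex_norm_def by blast
    then have "d *\<^sub>R (z - x) = ((s - 1) * d) *\<^sub>R (x - b)" by (simp only: pzx bd)
    then have "(d * (s - 1)) *\<^sub>R (x - a) = (d * (s - 1)) *\<^sub>R (x - b)"
      unfolding zx scaleR_scaleR by (simp add: mult.commute)
    moreover have "d * (s - 1) \<noteq> 0" using dpos assms(5) by simp
    ultimately have "x - a = x - b" by simp
    then show ?thesis by simp
  qed
  then show ?thesis using assms(4) by blast
qed

lemma down_closed:
  fixes \<phi> :: "'a::euclidean_space \<Rightarrow> real"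
  assumes N: "is_norm \<phi>" and a: "a \<in> xi \<phi> K x"
    and eq: "delta \<phi> K (a + s *\<^sub>R (x - a)) = s * delta \<phi> K x" and "0 \<le> s'" "s' \<le> s"
  shows "delta \<phi> K (a + s' *\<^sub>R (x - a)) = s' * delta \<phi> K x"
proof -
  have aK: "a \<in> K" and ad: "\<phi> (x - a) = delta \<phi> K x" using a unfolding xi_def by auto
  then have Kne: "K \<noteq> {}" by auto
  have "delta \<phi> K (a + s' *\<^sub>R (x - a)) \<le> \<phi> (a - (a + s' *\<^sub>R (x - a)))" by (rule delta_le[OF N aK])
  also have "\<dots> = \<phi> ((- s') *\<^sub>R (x - a))" by (simp add: algebra_simps)
  also have "\<dots> = s' * delta \<phi> K x" using nrm(3)[OF N, of "- s'" "x - a"] assms(4) ad by simp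
  finally have le: "delta \<phi> K (a + s' *\<^sub>R (x - a)) \<le> s' * delta \<phi> K x" .
  have "s * delta \<phi> K x \<le> delta \<phi> K (a + s' *\<^sub>R (x - a)) + \<phi> ((a + s' *\<^sub>R (x - a)) - (a + s *\<^sub>R (x - a)))"
    using delta_lip[OF N Kne, of "a + s *\<^sub>R (x - a)" "a + s' *\<^sub>R (x - a)"] eq by simp
  also have "\<phi> ((a + s' *\<^sub>R (x - a)) - (a + s *\<^sub>R (x - a))) = \<phi> ((s' - s) *\<^sub>R (x - a))"
    by (simp add: algebra_simps)
  also have "\<dots> = (s - s') * delta \<phi> K x" using nrm(3)[OF N, of "s' - s" "x - a"] assms(5) ad by simp
  finally show ?thesis using le by (simp add: algebra_simps)
qed

lemma rho_geD:
  assumes "ereal \<sigma> \<le> rho \<phi> K y" "r < \<sigma>"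
  shows "\<exists>a\<in>xi \<phi> K y. \<exists>s>r. delta \<phi> K (a + s *\<^sub>R (y - a)) = s * delta \<phi> K y"
proof -
  have "ereal r < ereal \<sigma>" using assms(2) by simp
  then obtain v where "v \<in> ereal ` {s. \<exists>a \<in> xi \<phi> K y. delta \<phi> K (a + s *\<^sub>R (y - a)) = s * delta \<phi> K y}"
    "ereal r < v"
    using assms(1) unfolding rho_def le_Sup_iff by blast
  then show ?thesis by (auto; blast)
qed

lemma rho_geI:
  assumes "\<And>r. r < \<sigma> \<Longrightarrow> \<exists>a\<in>xi \<phi> K y. \<exists>s>r. delta \<phi> K (a + s *\<^sub>R (y - a)) = s * delta \<phi> K y"
  shows "ereal \<sigma> \<le> rho \<phi> K y"
  unfolding rho_def le_Sup_iff
proof (intro allI impI)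
  fix w assume "w < ereal \<sigma>"
  then obtain z where z: "w < z" "z < ereal \<sigma>" using dense by blast
  then obtain r where r: "z = ereal r" by (cases z) auto
  then have "r < \<sigma>" using z by simp
  then obtain a s where "a \<in> xi \<phi> K y" "s > r" "delta \<phi> K (a + s *\<^sub>R (y - a)) = s * delta \<phi> K y"
    using assms by blast
  then show "\<exists>v\<in>ereal ` {s. \<exists>a \<in> xi \<phi> K y. delta \<phi> K (a + s *\<^sub>R (y - a)) = s * delta \<phi> K y}. w < v"
  proof (intro bexI[of _ "ereal s"])
    have "ereal r < ereal s" using \<open>s > r\<close> by simp
    then show "w < ereal s" using z r by (metis less_trans)
  qed (use \<open>a \<in> xi \<phi> K y\<close> \<open>delta \<phi> K (a + s *\<^sub>R (y - a)) = s * delta \<phi> K y\<close> in blast)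
qed


lemma main_step:
  fixes \<phi> :: "'a::euclidean_space \<Rightarrow> real"
  assumes sc: "strictly_convex_norm \<phi>" and cl: "closed K" and "\<sigma> > 1" "0 < t" "t < \<sigma>"
    and y: "y \<in> Kt \<phi> K \<sigma>"
  shows "\<exists>a. xi \<phi> K y = {a} \<and> t *\<^sub>R y + (1 - t) *\<^sub>R a \<in> Kt \<phi> K (\<sigma> / t)
           \<and> xi \<phi> K (t *\<^sub>R y + (1 - t) *\<^sub>R a) = {a}"
proof -
  have N: "is_norm \<phi>" using sc unfolding strictly_convex_norm_def by simp
  have yK: "y \<notin> K" and rho: "ereal \<sigma> \<le> rho \<phi> K y" using y unfolding Kt_def by auto
  obtain a s where a: "a \<in> xi \<phi> K y" and s: "s > max 1 t"
    and eq: "delta \<phi> K (a + s *\<^sub>R (y - a)) = s * delta \<phi> K y"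
    using rho_geD[OF rho, of "max 1 t"] assms by auto
  have aK: "a \<in> K" and ad: "\<phi> (y - a) = delta \<phi> K y" using a unfolding xi_def by auto
  then have Kne: "K \<noteq> {}" by auto
  define d where "d = delta \<phi> K y"
  have dpos: "d > 0" unfolding d_def by (rule delta_pos[OF N cl Kne yK])
  have xiy: "xi \<phi> K y = {a}" by (rule xi_unique[OF sc cl yK a _ eq]) (use s in auto)
  define z where "z = t *\<^sub>R y + (1 - t) *\<^sub>R a"
  have z': "z = a + t *\<^sub>R (y - a)" unfolding z_def by (simp add: algebra_simps)
  have za: "z - a = t *\<^sub>R (y - a)" unfolding z' by simp
  have dz: "delta \<phi> K z = t * d" unfolding z' d_def
    by (rule down_closed[OF N a eq]) (use s assms in auto)
  have zK: "z \<notin> K"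
  proof
    assume "z \<in> K"
    then have "delta \<phi> K z \<le> \<phi> (z - z)" by (rule delta_le[OF N])
    then have "delta \<phi> K z \<le> 0" using nrm(2)[OF N, of 0] by simp
    moreover have "0 < t * d" using dpos assms(4) by simp
    ultimately show False using dz by simp
  qed
  have pza: "\<phi> (z - a) = t * d" unfolding za using nrm(3)[OF N] assms ad d_def by simp
  have az: "a \<in> xi \<phi> K z" unfolding xi_def using aK pza dz by simp
  have resc: "delta \<phi> K (a + u *\<^sub>R (z - a)) = delta \<phi> K (a + (u * t) *\<^sub>R (y - a))" for u
    unfolding za by (simp add: mult.commute)
  have xiz: "xi \<phi> K z = {a}"
  proof (rule xi_unique[OF sc cl zK az, of "s / t"])
    show "1 < s / t" using s assms by (simp add: field_simps)
    show "delta \<phi> K (a + (s / t) *\<^sub>R (z - a)) = s / t * delta \<phi> K z"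
      unfolding resc dz using assms eq d_def by simp
  qed
  have "ereal (\<sigma> / t) \<le> rho \<phi> K z"
  proof (rule rho_geI)
    fix r assume "r < \<sigma> / t"
    then have "r * t < \<sigma>" using assms by (simp add: field_simps)
    then obtain a' s' where a': "a' \<in> xi \<phi> K y" and s': "s' > r * t"
      and eq': "delta \<phi> K (a' + s' *\<^sub>R (y - a')) = s' * delta \<phi> K y"
      using rho_geD[OF rho] by blast
    have "a' = a" using a' xiy by simp
    show "\<exists>a\<in>xi \<phi> K z. \<exists>s>r. delta \<phi> K (a + s *\<^sub>R (z - a)) = s * delta \<phi> K z"
    proof (intro bexI[OF _ az] exI[of _ "s' / t"] conjI)
      show "r < s' / t" using s' assms by (simp add: field_simps)
      show "delta \<phi> K (a + (s' / t) *\<^sub>R (z - a)) = s' / t * delta \<phi> K z"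
        unfolding resc dz using assms eq' d_def \<open>a' = a\<close> by simp
    qed
  qed
  then have "z \<in> Kt \<phi> K (\<sigma> / t)" unfolding Kt_def using zK by simp
  then show ?thesis using xiy xiz unfolding z_def by blast
qed

lemma xi_cont:
  fixes \<phi> :: "'a::euclidean_space \<Rightarrow> real"
  assumes N: "is_norm \<phi>" and cl: "closed K" and A: "\<And>y. y \<in> A \<Longrightarrow> xi \<phi> K y = {p y}"
  shows "continuous_on A p"
proof (rule continuous_on_sequentiallyI)
  fix u a assume uA: "\<forall>n. u n \<in> A" and aA: "a \<in> A" and ua: "u \<longlonglongrightarrow> a"
  have pu: "p (u n) \<in> K" "\<phi> (u n - p (u n)) = delta \<phi> K (u n)" for n
    using A[of "u n"] uA unfolding xi_def by auto
  have pa: "p a \<in> K" using A[OF aA] unfolding xi_def by auto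
  then have Kne: "K \<noteq> {}" by auto
  obtain c where c: "c > 0" "\<And>x. c * norm x \<le> \<phi> x" using nrm_lower[OF N] by blast
  have "(\<lambda>n. delta \<phi> K (u n)) \<longlonglongrightarrow> delta \<phi> K a" by (rule delta_tendsto[OF N Kne ua])
  then have "Bseq (\<lambda>n. delta \<phi> K (u n))" by (intro convergent_imp_Bseq convergentI)
  then obtain D where D: "\<And>n. norm (delta \<phi> K (u n)) \<le> D" by (meson BseqE)
  have "(\<lambda>n. u n - a) \<longlonglongrightarrow> 0" using ua by (simp add: LIM_zero)
  then have "Bseq (\<lambda>n. u n - a)" by (intro convergent_imp_Bseq convergentI)
  then obtain B where B: "\<And>n. norm (u n - a) \<le> B" by (meson BseqE)
  define S where "S = K \<inter> cball a (D / c + B)"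
  have "compact S" unfolding S_def using cl by (intro closed_Int_compact) auto
  have inS: "p (u n) \<in> S" for n
  proof -
    have "c * norm (u n - p (u n)) \<le> D" using c(2)[of "u n - p (u n)"] pu(2)[of n] D[of n] by simp
    then have "norm (u n - p (u n)) \<le> D / c" using c(1) by (simp add: field_simps)
    moreover have "norm (a - p (u n)) \<le> norm (u n - p (u n)) + norm (u n - a)"
      using norm_triangle_ineq[of "u n - p (u n)" "a - u n"] by (simp add: norm_minus_commute)
    ultimately have "norm (a - p (u n)) \<le> D / c + B" using B[of n] by simp
    then show ?thesis unfolding S_def using pu(1) by (simp add: dist_norm)
  qed
  show "(\<lambda>n. p (u n)) \<longlonglongrightarrow> p a"
  proof (rule ccontr)
    assume nc: "\<not> (\<lambda>n. p (u n)) \<longlonglongrightarrow> p a"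
    then obtain e where e: "e > 0" "\<not> eventually (\<lambda>n. dist (p (u n)) (p a) < e) sequentially"
      unfolding tendsto_iff by blast
    then have "infinite {n. \<not> dist (p (u n)) (p a) < e}"
      unfolding cofinite_eq_sequentially[symmetric] eventually_cofinite by simp
    then obtain r :: "nat \<Rightarrow> nat" where r: "strict_mono r" "\<And>n. \<not> dist (p (u (r n))) (p a) < e"
      using infinite_enumerate by blast
    obtain l q where l: "l \<in> S" "strict_mono (q :: nat \<Rightarrow> nat)"
        "((\<lambda>n. p (u (r n))) \<circ> q) \<longlonglongrightarrow> l"
      using seq_compactE[OF compact_imp_seq_compact[OF \<open>compact S\<close>], of "\<lambda>n. p (u (r n))"] inS by blast
    define w where "w = u \<circ> r \<circ> q"
    have "strict_mono (r \<circ> q)" using r(1) l(2) by (rule strict_mono_o)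
    then have wa: "w \<longlonglongrightarrow> a" unfolding w_def o_assoc[symmetric] by (rule LIMSEQ_subseq_LIMSEQ[OF ua])
    have pw: "(\<lambda>n. p (w n)) \<longlonglongrightarrow> l" using l(3) unfolding w_def by (simp add: o_def)
    have "(\<lambda>n. \<phi> (w n - p (w n))) \<longlonglongrightarrow> \<phi> (a - l)"
      by (rule nrm_tendsto[OF N tendsto_diff[OF wa pw]])
    moreover have "(\<lambda>n. \<phi> (w n - p (w n))) = (\<lambda>n. delta \<phi> K (w n))"
      using pu unfolding w_def by simp
    moreover have "(\<lambda>n. delta \<phi> K (w n)) \<longlonglongrightarrow> delta \<phi> K a" by (rule delta_tendsto[OF N Kne wa])
    ultimately have "\<phi> (a - l) = delta \<phi> K a" using LIMSEQ_unique by metis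
    moreover have "l \<in> K" using l(1) unfolding S_def by simp
    ultimately have "l \<in> xi \<phi> K a" unfolding xi_def by simp
    then have "l = p a" using A[OF aA] by simp
    then have "eventually (\<lambda>n. dist (p (w n)) (p a) < e) sequentially"
      using pw e(1) by (simp add: tendsto_iff)
    then obtain N where "\<forall>n\<ge>N. dist (p (w n)) (p a) < e" unfolding eventually_sequentially by blast
    then have "dist (p (w N)) (p a) < e" by simp
    then show False using r(2)[of "q N"] unfolding w_def by simp
  qed
qed


theorem lemma2p34:
  fixes \<phi> :: "real ^ 'n \<Rightarrow> real" and K :: "(real ^ 'n) set" and \<sigma> t :: real
  assumes "strictly_convex_norm \<phi>"
    and "C2_off_origin \<phi>"
    and "closed K"
    and "\<sigma> > 1"
    and "0 < t" and "t < \<sigma>"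
  shows "\<exists>f g. (\<forall>y \<in> Kt \<phi> K \<sigma>. hmap \<phi> K t y = {f y})
             \<and> (\<forall>y \<in> Kt \<phi> K (\<sigma> / t). hmap \<phi> K (1 / t) y = {g y})
             \<and> homeomorphism (Kt \<phi> K \<sigma>) (Kt \<phi> K (\<sigma> / t)) f g"
proof -
  have N: "is_norm \<phi>" using assms(1) unfolding strictly_convex_norm_def by simp
  define p where "p y = (SOME a. a \<in> xi \<phi> K y)" for y
  have p: "p y = a" if "xi \<phi> K y = {a}" for y a
    unfolding p_def that by simp
  define f where "f y = t *\<^sub>R y + (1 - t) *\<^sub>R p y" for y
  define g where "g y = (1 / t) *\<^sub>R y + (1 - 1 / t) *\<^sub>R p y" for y
  have A: "xi \<phi> K y = {p y} \<and> f y \<in> Kt \<phi> K (\<sigma> / t) \<and> xi \<phi> K (f y) = {p y}"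
    if "y \<in> Kt \<phi> K \<sigma>" for y
    using main_step[OF assms(1,3,4,5,6) that] p unfolding f_def by metis
  have s2: "\<sigma> / t > 1" "0 < 1 / t" "1 / t < \<sigma> / t" using assms by (simp_all add: field_simps)
  have e: "\<sigma> / t / (1 / t) = \<sigma>" using assms by simp
  have B: "xi \<phi> K y = {p y} \<and> g y \<in> Kt \<phi> K \<sigma> \<and> xi \<phi> K (g y) = {p y}"
    if "y \<in> Kt \<phi> K (\<sigma> / t)" for y
    using main_step[OF assms(1,3) s2 that] p unfolding g_def e by metis
  have hm: "hmap \<phi> K t' y = {t' *\<^sub>R y + (1 - t') *\<^sub>R a}" if "xi \<phi> K y = {a}" for t' y a
    unfolding hmap_def that by simp
  show ?thesis
  proof (rule exI[of _ f], rule exI[of _ g], intro conjI)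
    show "\<forall>y \<in> Kt \<phi> K \<sigma>. hmap \<phi> K t y = {f y}" using A hm unfolding f_def by metis
  next
    show "\<forall>y \<in> Kt \<phi> K (\<sigma> / t). hmap \<phi> K (1 / t) y = {g y}" using B hm unfolding g_def by metis
  next
    show "homeomorphism (Kt \<phi> K \<sigma>) (Kt \<phi> K (\<sigma> / t)) f g"
    proof (rule homeomorphismI)
      have "continuous_on (Kt \<phi> K \<sigma>) p" by (rule xi_cont[OF N assms(3)]) (use A in blast)
      then show "continuous_on (Kt \<phi> K \<sigma>) f" unfolding f_def by (intro continuous_intros)
      have "continuous_on (Kt \<phi> K (\<sigma> / t)) p" by (rule xi_cont[OF N assms(3)]) (use B in blast)
      then show "continuous_on (Kt \<phi> K (\<sigma> / t)) g" unfolding g_def by (intro continuous_intros)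
      show "f ` Kt \<phi> K \<sigma> \<subseteq> Kt \<phi> K (\<sigma> / t)" using A by blast
      show "g ` Kt \<phi> K (\<sigma> / t) \<subseteq> Kt \<phi> K \<sigma>" using B by blast
    next
      fix y assume y: "y \<in> Kt \<phi> K \<sigma>"
      then have "p (f y) = p y" using A p by metis
      then show "g (f y) = y" unfolding g_def using assms(5)
        by (simp add: f_def algebra_simps)
    next
      fix y assume y: "y \<in> Kt \<phi> K (\<sigma> / t)"
      then have "p (g y) = p y" using B p by metis
      then show "f (g y) = y" unfolding f_def using assms(5)
        by (simp add: g_def algebra_simps)
    qed
  qed
qed

end
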